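(* The expected number of C3's in the OSW graph $G_n$ that contain at least one long-range edge of type $w$ (that is, directed 3-cycles $(x,y,z)$, counted up to cyclic rotation, of pairwise distinct vertices whose three consecutive pairs are each of type $s$ or $w$ with at least one of type $w$) is $\mathcal{O}\left(n^2/\log n\right)$.
   Context: For an integer $n\ge1$, the $n$-octahedral graph $G'_n=(V,E')$ is the undirected graph with vertex set $V=\{u\in\mathbb{Z}^3:|u_1|+|u_2|+|u_3|=n\}$ and edge set $E'=\{\{v,w\}\subset V: v\neq w,\ |v_i-w_i|\le 1 \text{ for all } i=1,2,3\}$. For $u,v\in V$, $d_{uv}$ denotes the shortest-path distance in $G'_n$, and $Z_u=\left(\sum_{w\in V\setminus\{u\}} d_{uw}^{-2}\right)^{-1}$. The OSW random graph $G_n=(V,E)$ is the directed graph in which, for every $\{u,v\}\in E'$, both $(u,v),(v,u)\in E$, and in addition each vertex $u\in V$, independently of the others, chooses one vertex $v\in V\setminus\{u\}$ with probability $Z_u d_{uv}^{-2}$ and the long-range edge $(u,v)$ is added; $C_{uv}$ denotes the event that $u$ chooses $v$. For an ordered pair $(x,y)$ of distinct vertices, say $(x,y)$ is of type $s$ if $\{x,y\}\in E'$, and of type $w$ if $d_{xy}\ge2$ and $C_{xy}$ occurs. *)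

theory Defs
  imports "HOL-Probability.Probability" "HOL-Library.Landau_Symbols"
begin

type_synonym vtx = "int \<times> int \<times> int"

definition c1 :: "vtx \<Rightarrow> int" where "c1 u = fst u"
definition c2 :: "vtx \<Rightarrow> int" where "c2 u = fst (snd u)"
definition c3 :: "vtx \<Rightarrow> int" where "c3 u = snd (snd u)"

definition octV :: "nat \<Rightarrow> vtx set" where
  "octV n = {u. \<bar>c1 u\<bar> + \<bar>c2 u\<bar> + \<bar>c3 u\<bar> = int n}"

definition octAdj :: "nat \<Rightarrow> vtx \<Rightarrow> vtx \<Rightarrow> bool" where
  "octAdj n v w \<longleftrightarrow> v \<in> octV n \<and> w \<in> octV n \<and> v \<noteq> w \<and>
     \<bar>c1 v - c1 w\<bar> \<le> 1 \<and> \<bar>c2 v - c2 w\<bar> \<le> 1 \<and> \<bar>c3 v - c3 w\<bar> \<le> 1"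

definition octDist :: "nat \<Rightarrow> vtx \<Rightarrow> vtx \<Rightarrow> nat" where
  "octDist n u v = (LEAST k. \<exists>p :: nat \<Rightarrow> vtx. p 0 = u \<and> p k = v \<and>
       (\<forall>i<k. octAdj n (p i) (p (Suc i))))"

definition Zc :: "nat \<Rightarrow> vtx \<Rightarrow> real" where
  "Zc n u = inverse (\<Sum>w\<in>octV n - {u}. 1 / (real (octDist n u w))^2)"

definition choice_pmf :: "nat \<Rightarrow> vtx \<Rightarrow> vtx pmf" where
  "choice_pmf n u = embed_pmf (\<lambda>v. if v \<in> octV n \<and> v \<noteq> u
       then Zc n u / (real (octDist n u v))^2 else 0)"

text \<open>Independent choices of all vertices: c u is the vertex chosen by u,
  so the event C_uv is "c u = v".\<close>
definition osw_pmf :: "nat \<Rightarrow> (vtx \<Rightarrow> vtx) pmf" where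
  "osw_pmf n = Pi_pmf (octV n) (0,0,0) (choice_pmf n)"

definition type_s :: "nat \<Rightarrow> vtx \<Rightarrow> vtx \<Rightarrow> bool" where
  "type_s n x y \<longleftrightarrow> octAdj n x y"

definition type_w :: "nat \<Rightarrow> (vtx \<Rightarrow> vtx) \<Rightarrow> vtx \<Rightarrow> vtx \<Rightarrow> bool" where
  "type_w n c x y \<longleftrightarrow> octDist n x y \<ge> 2 \<and> c x = y"

definition C3w_triples :: "nat \<Rightarrow> (vtx \<Rightarrow> vtx) \<Rightarrow> (vtx \<times> vtx \<times> vtx) set" where
  "C3w_triples n c = {(x, y, z). x \<in> octV n \<and> y \<in> octV n \<and> z \<in> octV n \<and>
      x \<noteq> y \<and> y \<noteq> z \<and> x \<noteq> z \<and>
      (type_s n x y \<or> type_w n c x y) \<and> (type_s n y z \<or> type_w n c y z) \<and>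
      (type_s n z x \<or> type_w n c z x) \<and>
      (type_w n c x y \<or> type_w n c y z \<or> type_w n c z x)}"

definition num_C3w :: "nat \<Rightarrow> (vtx \<Rightarrow> vtx) \<Rightarrow> nat" where
  "num_C3w n c = card ((\<lambda>(x, y, z). {(x, y, z), (y, z, x), (z, x, y)}) ` C3w_triples n c)"

end

theory Submission
  imports Defs "HOL-Analysis.Harmonic_Numbers"
begin


definition near :: "vtx \<Rightarrow> vtx \<Rightarrow> bool" where
 "near v w \<longleftrightarrow> \<bar>c1 v - c1 w\<bar> \<le> 1 \<and> \<bar>c2 v - c2 w\<bar> \<le> 1 \<and> \<bar>c3 v - c3 w\<bar> \<le> 1"

lemma octAdj_near: "octAdj n v w \<longleftrightarrow> v \<in> octV n \<and> w \<in> octV n \<and> v \<noteq> w \<and> near v w"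
  unfolding octAdj_def near_def by auto

lemma octDist_le_path:
  assumes "p 0 = u" "p k = v" "\<forall>i<k. octAdj n (p i) (p (Suc i))"
  shows "octDist n u v \<le> k"
  unfolding octDist_def by (rule Least_le) (use assms in blast)

lemma octDist_pos:
  assumes "p 0 = u" "p k = v" "\<forall>i<k. octAdj n (p i) (p (Suc i))" "u \<noteq> v"
  shows "octDist n u v \<ge> 1"
proof -
  let ?P = "\<lambda>k. \<exists>p :: nat \<Rightarrow> vtx. p 0 = u \<and> p k = v \<and> (\<forall>i<k. octAdj n (p i) (p (Suc i)))"
  have "?P k" using assms by blast
  hence "?P (octDist n u v)" unfolding octDist_def by (rule LeastI)
  then obtain q where "q 0 = u" "q (octDist n u v) = v" by blast
  thus ?thesis using assms(4) by (cases "octDist n u v") auto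
qed

lemma octV_sub: "octV n \<subseteq> (\<lambda>(a,b,s). (a,b,s*(int n-\<bar>a\<bar>-\<bar>b\<bar>))) ` ({-int n..int n}\<times>{-int n..int n}\<times>{-1,1})"
proof
  fix u assume "u \<in> octV n"
  then obtain a b c where u: "u = (a,b,c)" "\<bar>a\<bar>+\<bar>b\<bar>+\<bar>c\<bar> = int n"
    unfolding octV_def c1_def c2_def c3_def by (cases u) auto
  show "u \<in> (\<lambda>(a,b,s). (a,b,s*(int n-\<bar>a\<bar>-\<bar>b\<bar>))) ` ({-int n..int n}\<times>{-int n..int n}\<times>{-1,1})"
  proof (cases "c \<ge> 0")
    case True
    thus ?thesis using u by (intro image_eqI[where x="(a,b,1)"]) auto
  next
    case False
    thus ?thesis using u by (intro image_eqI[where x="(a,b,-1)"]) auto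
  qed
qed

lemma finite_octV: "finite (octV n)"
  by (rule finite_subset[OF octV_sub]) auto

lemma card_octV: "real (card (octV n)) \<le> 2 * (2 * real n + 1)^2"
proof -
  have "card (octV n) \<le> card ((\<lambda>(a,b,s). (a,b,s*(int n-\<bar>a\<bar>-\<bar>b\<bar>))) ` ({-int n..int n}\<times>{-int n..int n}\<times>{-1::int,1}))"
    by (rule card_mono[OF _ octV_sub]) auto
  also have "\<dots> \<le> card ({-int n..int n}\<times>{-int n..int n}\<times>{-1::int,1})"
    by (rule card_image_le) auto
  also have "\<dots> = (2*n+1)*(2*n+1)*2"
  proof -
    have e: "nat (2*int n+1) = 2*n+1" by simp
    show ?thesis by (simp add: card_cartesian_product e)
  qed
  finally have "real (card (octV n)) \<le> real ((2*n+1)*(2*n+1)*2)" by linarith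
  thus ?thesis by (simp add: power2_eq_square algebra_simps)
qed



locale grid =
  fixes n m :: nat and w :: "nat \<Rightarrow> nat \<Rightarrow> vtx"
  assumes inj: "inj_on (\<lambda>(i,j). w i j) ({..m} \<times> {..m})"
    and mem: "\<And>i j. i \<le> m \<Longrightarrow> j \<le> m \<Longrightarrow> w i j \<in> octV n"
    and n1: "\<And>i j. i < m \<Longrightarrow> j \<le> m \<Longrightarrow> near (w i j) (w (Suc i) j)"
    and n2: "\<And>i j. i \<le> m \<Longrightarrow> j < m \<Longrightarrow> near (w i j) (w i (Suc j))"
begin

lemma wne: "i \<le> m \<Longrightarrow> j \<le> m \<Longrightarrow> i' \<le> m \<Longrightarrow> j' \<le> m \<Longrightarrow> (i,j) \<noteq> (i',j') \<Longrightarrow> w i j \<noteq> w i' j'"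
proof
  assume "i \<le> m" "j \<le> m" "i' \<le> m" "j' \<le> m" "(i,j) \<noteq> (i',j')" "w i j = w i' j'"
  thus False using inj_onD[OF inj, of "(i,j)" "(i',j')"] by auto
qed

lemma path_ex:
  assumes ij: "i \<le> m" "j \<le> m"
  shows "\<exists>p. p 0 = w 0 0 \<and> p (i+j) = w i j \<and> (\<forall>t<i+j. octAdj n (p t) (p (Suc t)))"
proof -
  define p where "p = (\<lambda>t. if t \<le> i then w t 0 else w i (t - i))"
  have 1: "p 0 = w 0 0" by (simp add: p_def)
  have 2: "p (i+j) = w i j" by (cases j) (auto simp: p_def)
  have 3: "\<forall>t<i+j. octAdj n (p t) (p (Suc t))"
  proof (intro allI impI)
    fix t assume t: "t < i + j"
    show "octAdj n (p t) (p (Suc t))"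
    proof (cases "t < i")
      case True
      then have e: "p t = w t 0" "p (Suc t) = w (Suc t) 0" by (auto simp: p_def)
      have "w t 0 \<noteq> w (Suc t) 0" using True ij by (intro wne) auto
      moreover have "w t 0 \<in> octV n" "w (Suc t) 0 \<in> octV n" using True ij by (auto intro!: mem)
      moreover have "near (w t 0) (w (Suc t) 0)" using True ij by (intro n1) auto
      ultimately show ?thesis unfolding e octAdj_near by blast
    next
      case False
      then have e: "p t = w i (t-i)" "p (Suc t) = w i (Suc (t-i))" by (auto simp: p_def Suc_diff_le)
      have "w i (t-i) \<noteq> w i (Suc (t-i))" using False ij t by (intro wne) auto
      moreover have "w i (t-i) \<in> octV n" "w i (Suc (t-i)) \<in> octV n" using False ij t by (auto intro!: mem)
      moreover have "near (w i (t-i)) (w i (Suc (t-i)))" using False ij t by (intro n2) auto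
      ultimately show ?thesis unfolding e octAdj_near by blast
    qed
  qed
  show ?thesis using 1 2 3 by blast
qed

lemma dist_le: "i \<le> m \<Longrightarrow> j \<le> m \<Longrightarrow> octDist n (w 0 0) (w i j) \<le> i + j"
proof -
  assume a: "i \<le> m" "j \<le> m"
  then obtain p where "p 0 = w 0 0" "p (i+j) = w i j" "\<forall>t<i+j. octAdj n (p t) (p (Suc t))"
    using path_ex[of i j] by blast
  thus ?thesis by (rule octDist_le_path)
qed

lemma dist_pos: "i \<le> m \<Longrightarrow> j \<le> m \<Longrightarrow> (i,j) \<noteq> (0,0) \<Longrightarrow> octDist n (w 0 0) (w i j) \<ge> 1"
proof -
  assume a: "i \<le> m" "j \<le> m" "(i,j) \<noteq> (0,0)"
  then obtain p where "p 0 = w 0 0" "p (i+j) = w i j" "\<forall>t<i+j. octAdj n (p t) (p (Suc t))"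
    using path_ex[of i j] by blast
  moreover have "w 0 0 \<noteq> w i j" using a by (intro wne) auto
  ultimately show ?thesis by (rule octDist_pos)
qed

lemma sum_lower:
  "(\<Sum>v\<in>octV n - {w 0 0}. 1 / real (octDist n (w 0 0) v)^2) \<ge> ln (real m + 1) / 4"
proof -
  define T where "T = Sigma {1..m} (\<lambda>i. {..<i})"
  let ?u = "w 0 0"
  let ?f = "\<lambda>v. 1 / real (octDist n ?u v)^2"
  have Tsub: "T \<subseteq> {..m} \<times> {..m}" by (auto simp: T_def)
  have injT: "inj_on (\<lambda>(i,j). w i j) T" using inj Tsub by (rule inj_on_subset)
  have img: "(\<lambda>(i,j). w i j) ` T \<subseteq> octV n - {?u}"
  proof
    fix v assume "v \<in> (\<lambda>(i,j). w i j) ` T"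
    then obtain i j where v: "v = w i j" "1 \<le> i" "i \<le> m" "j < i" by (auto simp: T_def)
    have "w 0 0 \<noteq> w i j" using v by (intro wne) auto
    thus "v \<in> octV n - {?u}" using v by (auto intro!: mem)
  qed
  have "(\<Sum>v\<in>(\<lambda>(i,j). w i j) ` T. ?f v) \<le> (\<Sum>v\<in>octV n - {?u}. ?f v)"
    by (rule sum_mono2[OF _ img]) (auto simp: finite_octV)
  moreover have "(\<Sum>v\<in>(\<lambda>(i,j). w i j) ` T. ?f v) = (\<Sum>(i,j)\<in>T. ?f (w i j))"
    by (subst sum.reindex[OF injT]) (simp add: case_prod_beta)
  moreover have "(\<Sum>(i,j)\<in>T. ?f (w i j)) \<ge> (\<Sum>(i,j)\<in>T. 1 / (4 * real i^2))"
  proof (rule sum_mono)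
    fix x assume x: "x \<in> T"
    obtain i j where xe: "x = (i,j)" by force
    have ij: "1 \<le> i" "i \<le> m" "j < i" using x xe by (auto simp: T_def)
    have d1: "octDist n ?u (w i j) \<le> i + j" using ij by (intro dist_le) auto
    have d2: "octDist n ?u (w i j) \<ge> 1" using ij by (intro dist_pos) auto
    have "real (octDist n ?u (w i j)) \<le> 2 * real i" using d1 ij by linarith
    moreover have "real (octDist n ?u (w i j)) \<ge> 1" using d2 by simp
    ultimately have "real (octDist n ?u (w i j))^2 \<le> (2 * real i)^2"
      by (intro power_mono) auto
    hence "1 / (2 * real i)^2 \<le> 1 / real (octDist n ?u (w i j))^2"
    proof (rule divide_left_mono)
      show "0 < (2 * real i)\<^sup>2 * real (octDist n ?u (w i j))^2" using d2 ij(1) by simp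
    qed auto
    thus "(case x of (i, j) \<Rightarrow> 1 / (4 * real i^2)) \<le> (case x of (i, j) \<Rightarrow> ?f (w i j))"
      by (simp add: xe power_mult_distrib)
  qed
  moreover have "(\<Sum>(i,j)\<in>T. 1 / (4 * real i^2)) = (\<Sum>i=1..m. 1 / (4 * real i))"
  proof -
    have "(\<Sum>(i,j)\<in>T. 1 / (4 * real i^2)) = (\<Sum>i=1..m. \<Sum>j<i. 1 / (4 * real i^2))"
      unfolding T_def by (rule sum.Sigma[symmetric]) auto
    also have "\<dots> = (\<Sum>i=1..m. 1 / (4 * real i))"
      by (intro sum.cong refl) (auto simp: power2_eq_square)
    finally show ?thesis .
  qed
  moreover have "(\<Sum>i=1..m. 1 / (4 * real i)) = harm m / 4"
    unfolding harm_def sum_divide_distrib by (intro sum.cong refl) (simp add: field_simps)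
  moreover have "ln (real m + 1) \<le> harm m" by (rule ln_le_harm)
  ultimately show ?thesis by linarith
qed

end



lemma case1:
  assumes u: "(a,b,c) \<in> octV n" and am: "2 * int m \<le> \<bar>a\<bar>"
  shows "ln (real m + 1) / 4 \<le> (\<Sum>v\<in>octV n - {(a,b,c)}. 1 / real (octDist n (a,b,c) v)^2)"
proof -
  have n: "\<bar>a\<bar> + \<bar>b\<bar> + \<bar>c\<bar> = int n" using u by (simp add: octV_def c1_def c2_def c3_def)
  define w where "w = (\<lambda>i j. (let X = int n - \<bar>b + int i\<bar> - \<bar>c + int j\<bar> in if a \<ge> 0 then X else -X,
      b + int i, c + int j))"
  have w00: "w 0 0 = (a,b,c)" using n by (auto simp: w_def Let_def)
  interpret grid n m w
  proof
    show "inj_on (\<lambda>(i, j). w i j) ({..m} \<times> {..m})" by (auto simp: inj_on_def w_def Let_def)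
  next
    fix i j assume ij: "i \<le> m" "j \<le> m"
    have "\<bar>b + int i\<bar> \<le> \<bar>b\<bar> + int i" "\<bar>c + int j\<bar> \<le> \<bar>c\<bar> + int j" by linarith+
    hence "int n - \<bar>b + int i\<bar> - \<bar>c + int j\<bar> \<ge> 0" using n am ij by linarith
    thus "w i j \<in> octV n" by (auto simp: w_def Let_def octV_def c1_def c2_def c3_def)
  next
    fix i j assume ij: "i < m" "j \<le> m"
    show "near (w i j) (w (Suc i) j)" by (simp add: w_def Let_def near_def c1_def c2_def c3_def) arith
  next
    fix i j assume ij: "i \<le> m" "j < m"
    show "near (w i j) (w i (Suc j))" by (simp add: w_def Let_def near_def c1_def c2_def c3_def) arith
  qed
  show ?thesis using sum_lower by (simp add: w00)
qed

lemma case2: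
  assumes u: "(a,b,c) \<in> octV n" and am: "2 * int m \<le> \<bar>b\<bar>"
  shows "ln (real m + 1) / 4 \<le> (\<Sum>v\<in>octV n - {(a,b,c)}. 1 / real (octDist n (a,b,c) v)^2)"
proof -
  have n: "\<bar>a\<bar> + \<bar>b\<bar> + \<bar>c\<bar> = int n" using u by (simp add: octV_def c1_def c2_def c3_def)
  define w where "w = (\<lambda>i j. (a + int i, let X = int n - \<bar>a + int i\<bar> - \<bar>c + int j\<bar> in if b \<ge> 0 then X else -X,
      c + int j))"
  have w00: "w 0 0 = (a,b,c)" using n by (auto simp: w_def Let_def)
  interpret grid n m w
  proof
    show "inj_on (\<lambda>(i, j). w i j) ({..m} \<times> {..m})" by (auto simp: inj_on_def w_def Let_def)
  next
    fix i j assume ij: "i \<le> m" "j \<le> m"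
    have "\<bar>a + int i\<bar> \<le> \<bar>a\<bar> + int i" "\<bar>c + int j\<bar> \<le> \<bar>c\<bar> + int j" by linarith+
    hence "int n - \<bar>a + int i\<bar> - \<bar>c + int j\<bar> \<ge> 0" using n am ij by linarith
    thus "w i j \<in> octV n" by (auto simp: w_def Let_def octV_def c1_def c2_def c3_def)
  next
    fix i j assume ij: "i < m" "j \<le> m"
    show "near (w i j) (w (Suc i) j)" by (simp add: w_def Let_def near_def c1_def c2_def c3_def) arith
  next
    fix i j assume ij: "i \<le> m" "j < m"
    show "near (w i j) (w i (Suc j))" by (simp add: w_def Let_def near_def c1_def c2_def c3_def) arith
  qed
  show ?thesis using sum_lower by (simp add: w00)
qed

lemma case3:
  assumes u: "(a,b,c) \<in> octV n" and am: "2 * int m \<le> \<bar>c\<bar>"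
  shows "ln (real m + 1) / 4 \<le> (\<Sum>v\<in>octV n - {(a,b,c)}. 1 / real (octDist n (a,b,c) v)^2)"
proof -
  have n: "\<bar>a\<bar> + \<bar>b\<bar> + \<bar>c\<bar> = int n" using u by (simp add: octV_def c1_def c2_def c3_def)
  define w where "w = (\<lambda>i j. (a + int i, b + int j, let X = int n - \<bar>a + int i\<bar> - \<bar>b + int j\<bar> in if c \<ge> 0 then X else -X))"
  have w00: "w 0 0 = (a,b,c)" using n by (auto simp: w_def Let_def)
  interpret grid n m w
  proof
    show "inj_on (\<lambda>(i, j). w i j) ({..m} \<times> {..m})" by (auto simp: inj_on_def w_def Let_def)
  next
    fix i j assume ij: "i \<le> m" "j \<le> m"
    have "\<bar>a + int i\<bar> \<le> \<bar>a\<bar> + int i" "\<bar>b + int j\<bar> \<le> \<bar>b\<bar> + int j" by linarith+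
    hence "int n - \<bar>a + int i\<bar> - \<bar>b + int j\<bar> \<ge> 0" using n am ij by linarith
    thus "w i j \<in> octV n" by (auto simp: w_def Let_def octV_def c1_def c2_def c3_def)
  next
    fix i j assume ij: "i < m" "j \<le> m"
    show "near (w i j) (w (Suc i) j)" by (simp add: w_def Let_def near_def c1_def c2_def c3_def) arith
  next
    fix i j assume ij: "i \<le> m" "j < m"
    show "near (w i j) (w i (Suc j))" by (simp add: w_def Let_def near_def c1_def c2_def c3_def) arith
  qed
  show ?thesis using sum_lower by (simp add: w00)
qed

lemma sum_lower_V:
  assumes u: "u \<in> octV n" and nm: "6 * m \<le> n"
  shows "ln (real m + 1) / 4 \<le> (\<Sum>v\<in>octV n - {u}. 1 / real (octDist n u v)^2)"
proof -
  obtain a b c where ue: "u = (a,b,c)" by (cases u) auto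
  have n: "\<bar>a\<bar> + \<bar>b\<bar> + \<bar>c\<bar> = int n" using u ue by (simp add: octV_def c1_def c2_def c3_def)
  have "2 * int m \<le> \<bar>a\<bar> \<or> 2 * int m \<le> \<bar>b\<bar> \<or> 2 * int m \<le> \<bar>c\<bar>" using n nm by linarith
  thus ?thesis using case1[of a b c n m] case2[of a b c n m] case3[of a b c n m] u ue by auto
qed



definition Ssum :: "nat \<Rightarrow> vtx \<Rightarrow> real" where
  "Ssum n u = (\<Sum>v\<in>octV n - {u}. 1 / real (octDist n u v)^2)"

lemma pmf_choice:
  assumes pos: "0 < Ssum n u"
  shows "pmf (choice_pmf n u) v = (if v \<in> octV n \<and> v \<noteq> u then Zc n u / real (octDist n u v)^2 else 0)"
proof -
  let ?f = "\<lambda>v. if v \<in> octV n \<and> v \<noteq> u then Zc n u / real (octDist n u v)^2 else 0"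
  have Z: "Zc n u = inverse (Ssum n u)" by (simp add: Zc_def Ssum_def)
  have nn: "\<And>x. 0 \<le> ?f x" using pos Z by auto
  have "(\<integral>\<^sup>+x. ennreal (?f x) \<partial>count_space UNIV) = (\<integral>\<^sup>+x. ennreal (?f x) \<partial>count_space (octV n - {u}))"
    by (subst nn_integral_count_space_indicator) (auto intro!: nn_integral_cong split: split_indicator)
  also have "\<dots> = (\<Sum>x\<in>octV n - {u}. ennreal (?f x))"
    by (rule nn_integral_count_space_finite) (simp add: finite_octV)
  also have "\<dots> = ennreal (\<Sum>x\<in>octV n - {u}. ?f x)" by (rule sum_ennreal) (rule nn)
  also have "(\<Sum>x\<in>octV n - {u}. ?f x) = Zc n u * Ssum n u"
    by (simp add: Ssum_def sum_distrib_left)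
  also have "\<dots> = 1" using pos Z by simp
  finally have "(\<integral>\<^sup>+x. ennreal (?f x) \<partial>count_space UNIV) = 1" by simp
  thus ?thesis unfolding choice_pmf_def using nn by (subst pmf_embed_pmf) auto
qed

lemma pmf_choice_le:
  assumes pos: "0 < Ssum n u"
  shows "pmf (choice_pmf n u) v \<le> inverse (Ssum n u)"
proof -
  have Z: "Zc n u = inverse (Ssum n u)" by (simp add: Zc_def Ssum_def)
  have "Zc n u / real (octDist n u v)^2 \<le> Zc n u"
  proof (cases "octDist n u v = 0")
    case True thus ?thesis using pos Z by simp
  next
    case False
    hence "1 \<le> real (octDist n u v)^2" by simp
    thus ?thesis using pos Z by (simp add: divide_le_eq mult_le_cancel_left1) 
  qed
  thus ?thesis using pmf_choice[OF pos, of v] pos Z by auto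
qed

lemma E_prod:
  fixes h :: "'a \<Rightarrow> 'b \<Rightarrow> real"
  assumes fin: "finite V" and J: "J \<subseteq> V" and nn: "\<And>j v. 0 \<le> h j v" and bd: "\<And>j v. h j v \<le> B"
  shows "measure_pmf.expectation (Pi_pmf V d q) (\<lambda>c. \<Prod>j\<in>J. h j (c j))
         = (\<Prod>j\<in>J. measure_pmf.expectation (q j) (h j))"
proof -
  define h' where "h' j v = (if j \<in> J then h j v else 1)" for j v
  have "(\<lambda>c. \<Prod>j\<in>J. h j (c j)) = (\<lambda>c. \<Prod>j\<in>V. h' j (c j))"
    using J fin by (intro ext prod.mono_neutral_cong_left) (auto simp: h'_def)
  moreover have "measure_pmf.expectation (Pi_pmf V d q) (\<lambda>c. \<Prod>j\<in>V. h' j (c j))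
      = (\<Prod>j\<in>V. measure_pmf.expectation (q j) (h' j))"
  proof (rule expectation_prod_Pi_pmf[OF fin])
    fix x assume "x \<in> V"
    show "integrable (measure_pmf (q x)) (h' x)"
    proof (rule measure_pmf.integrable_const_bound[where B="max B 1"])
      have "\<And>v. norm (h' x v) \<le> max B 1"
      proof -
        fix v
        have "0 \<le> h x v" "h x v \<le> B" by (rule nn, rule bd)
        thus "norm (h' x v) \<le> max B 1" by (auto simp: h'_def)
      qed
      thus "AE v in measure_pmf (q x). norm (h' x v) \<le> max B 1" by simp
    qed simp
  qed (use nn in \<open>auto simp: h'_def\<close>)
  moreover have "(\<Prod>j\<in>V. measure_pmf.expectation (q j) (h' j)) = (\<Prod>j\<in>J. measure_pmf.expectation (q j) (h j))"
  proof -
    have a: "\<And>j. j \<notin> J \<Longrightarrow> h' j = (\<lambda>_. 1)" "\<And>j. j \<in> J \<Longrightarrow> h' j = h j"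
      by (auto simp: h'_def fun_eq_iff)
    show ?thesis using J fin by (intro prod.mono_neutral_cong_right) (auto simp: a)
  qed
  ultimately show ?thesis by simp
qed

lemma E_ind:
  "measure_pmf.expectation q (\<lambda>v. a + of_bool (v = y)) = a + pmf q y"
proof -
  have "(\<lambda>v. a + of_bool (v = y)) = (\<lambda>v. a + indicator {y} v)" by (auto simp: indicator_def)
  moreover have "measure_pmf.expectation q (\<lambda>v. a + indicator {y} v :: real) = a + pmf q y"
    by (subst Bochner_Integration.integral_add) (auto simp: measure_pmf_single intro!: measure_pmf.integrable_const_bound[where B=1])
  ultimately show ?thesis by simp
qed



definition Aa :: "nat \<Rightarrow> vtx \<Rightarrow> vtx \<Rightarrow> real" where "Aa n x y = of_bool (octAdj n x y)"
definition pp :: "nat \<Rightarrow> vtx \<Rightarrow> vtx \<Rightarrow> real" where "pp n x y = pmf (choice_pmf n x) y"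

definition Hc :: "nat \<Rightarrow> (vtx \<Rightarrow> vtx) \<Rightarrow> vtx \<Rightarrow> vtx \<Rightarrow> vtx \<Rightarrow> real" where
  "Hc n c x y z = (Aa n x y + of_bool (c x = y)) * (Aa n y z + of_bool (c y = z)) * (Aa n z x + of_bool (c z = x))
     - Aa n x y * Aa n y z * Aa n z x"

definition Gv :: "nat \<Rightarrow> vtx \<Rightarrow> vtx \<Rightarrow> vtx \<Rightarrow> real" where
  "Gv n x y z = (Aa n x y + pp n x y) * (Aa n y z + pp n y z) * (Aa n z x + pp n z x)
     - Aa n x y * Aa n y z * Aa n z x"

lemma boolK:
  fixes a1 w1 a2 w2 a3 w3 :: bool
  defines "K \<equiv> (of_bool a1 + of_bool w1) * (of_bool a2 + of_bool w2) * (of_bool a3 + of_bool w3)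
      - of_bool a1 * of_bool a2 * of_bool a3 :: real"
  shows "0 \<le> K" and "(a1 \<or> w1) \<Longrightarrow> (a2 \<or> w2) \<Longrightarrow> (a3 \<or> w3) \<Longrightarrow> (w1 \<or> w2 \<or> w3) \<Longrightarrow> 1 \<le> K"
  unfolding K_def by (cases a1; cases w1; cases a2; cases w2; cases a3; cases w3; simp)+

lemma Hc_nonneg: "0 \<le> Hc n c x y z"
  unfolding Hc_def Aa_def by (rule boolK(1))

lemma Hc_le: "Hc n c x y z \<le> 8"
  unfolding Hc_def Aa_def by (cases "octAdj n x y"; cases "octAdj n y z"; cases "octAdj n z x";
     cases "c x = y"; cases "c y = z"; cases "c z = x"; simp)

lemma Hc_mem: "(x,y,z) \<in> C3w_triples n c \<Longrightarrow> 1 \<le> Hc n c x y z"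
  unfolding Hc_def Aa_def C3w_triples_def type_s_def type_w_def
  by (rule boolK(2)) auto

lemma finite_C3w: "finite (C3w_triples n c)"
  by (rule finite_subset[of _ "octV n \<times> octV n \<times> octV n"]) (auto simp: C3w_triples_def finite_octV)

definition Dsum :: "nat \<Rightarrow> (vtx \<Rightarrow> vtx) \<Rightarrow> real" where
  "Dsum n c = (\<Sum>t\<in>octV n \<times> octV n \<times> octV n. case t of (x,y,z) \<Rightarrow>
      if x \<noteq> y \<and> y \<noteq> z \<and> x \<noteq> z then Hc n c x y z else 0)"

lemma num_le: "real (num_C3w n c) \<le> Dsum n c"
proof -
  have "num_C3w n c \<le> card (C3w_triples n c)"
    unfolding num_C3w_def by (rule card_image_le[OF finite_C3w])
  moreover have "real (card (C3w_triples n c)) =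
      (\<Sum>t\<in>octV n \<times> octV n \<times> octV n. of_bool (t \<in> C3w_triples n c))"
  proof -
    have "(octV n \<times> octV n \<times> octV n) \<inter> {t. t \<in> C3w_triples n c} = C3w_triples n c"
      by (auto simp: C3w_triples_def)
    thus ?thesis by (simp add: finite_octV)
  qed
  moreover have "(\<Sum>t\<in>octV n \<times> octV n \<times> octV n. of_bool (t \<in> C3w_triples n c)) \<le> Dsum n c"
    unfolding Dsum_def
  proof (rule sum_mono)
    fix t assume "t \<in> octV n \<times> octV n \<times> octV n"
    obtain x y z where t: "t = (x,y,z)" by (cases t) auto
    show "of_bool (t \<in> C3w_triples n c) \<le> (case t of (x,y,z) \<Rightarrow>
      if x \<noteq> y \<and> y \<noteq> z \<and> x \<noteq> z then Hc n c x y z else (0::real))"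
      using Hc_mem[of x y z n c] Hc_nonneg[of n c x y z] t
      by (auto simp: C3w_triples_def)
  qed
  ultimately show ?thesis by linarith
qed

lemma E_H:
  assumes pos: "\<And>u. u \<in> octV n \<Longrightarrow> 0 < Ssum n u"
    and xyz: "x \<in> octV n" "y \<in> octV n" "z \<in> octV n" "x \<noteq> y" "y \<noteq> z" "x \<noteq> z"
  shows "measure_pmf.expectation (osw_pmf n) (\<lambda>c. Hc n c x y z) = Gv n x y z"
proof -
  define hh where "hh j v = (if j = x then Aa n x y + of_bool (v = y) else if j = y then Aa n y z + of_bool (v = z)
      else Aa n z x + of_bool (v = x))" for j v
  have hnn: "\<And>j v. 0 \<le> hh j v" by (auto simp: hh_def Aa_def)
  have hbd: "\<And>j v. hh j v \<le> 2" by (auto simp: hh_def Aa_def)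
  have prodeq: "(\<lambda>c. \<Prod>j\<in>{x,y,z}. hh j (c j)) = (\<lambda>c. (Aa n x y + of_bool (c x = y)) * (Aa n y z + of_bool (c y = z)) * (Aa n z x + of_bool (c z = x)))"
    using xyz by (auto simp: hh_def)
  have "measure_pmf.expectation (osw_pmf n) (\<lambda>c. \<Prod>j\<in>{x,y,z}. hh j (c j))
        = (\<Prod>j\<in>{x,y,z}. measure_pmf.expectation (choice_pmf n j) (hh j))"
    unfolding osw_pmf_def using xyz by (intro E_prod[OF finite_octV _ hnn hbd]) auto
  also have "\<dots> = (Aa n x y + pp n x y) * (Aa n y z + pp n y z) * (Aa n z x + pp n z x)"
  proof -
    have "hh x = (\<lambda>v. Aa n x y + of_bool (v = y))" "hh y = (\<lambda>v. Aa n y z + of_bool (v = z))"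
         "hh z = (\<lambda>v. Aa n z x + of_bool (v = x))" using xyz by (auto simp: hh_def)
    thus ?thesis using xyz by (simp add: E_ind pp_def mult.assoc)
  qed
  finally have e1: "measure_pmf.expectation (osw_pmf n) (\<lambda>c. (Aa n x y + of_bool (c x = y)) * (Aa n y z + of_bool (c y = z)) * (Aa n z x + of_bool (c z = x)))
      = (Aa n x y + pp n x y) * (Aa n y z + pp n y z) * (Aa n z x + pp n z x)"
    by (simp only: prodeq)
  have int: "integrable (measure_pmf (osw_pmf n)) (\<lambda>c. (Aa n x y + of_bool (c x = y)) * (Aa n y z + of_bool (c y = z)) * (Aa n z x + of_bool (c z = x)))"
    by (rule measure_pmf.integrable_const_bound[where B=8]) (auto simp: Aa_def intro!: AE_pmfI)
  show ?thesis unfolding Hc_def Gv_def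
    by (subst Bochner_Integration.integral_diff[OF int]) (auto simp: e1)
qed



definition T3 :: "'a set \<Rightarrow> ('a \<Rightarrow> 'a \<Rightarrow> real) \<Rightarrow> ('a \<Rightarrow> 'a \<Rightarrow> real) \<Rightarrow> ('a \<Rightarrow> 'a \<Rightarrow> real) \<Rightarrow> real" where
  "T3 V f g h = (\<Sum>x\<in>V. \<Sum>y\<in>V. \<Sum>z\<in>V. f x y * g y z * h z x)"

lemma sum3_rot: "(\<Sum>x\<in>V. \<Sum>y\<in>V. \<Sum>z\<in>V. F x y z) = (\<Sum>y\<in>V. \<Sum>z\<in>V. \<Sum>x\<in>V. F x y z :: real)"
proof -
  have "(\<Sum>x\<in>V. \<Sum>y\<in>V. \<Sum>z\<in>V. F x y z) = (\<Sum>y\<in>V. \<Sum>x\<in>V. \<Sum>z\<in>V. F x y z)"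
    by (rule sum.swap)
  also have "\<dots> = (\<Sum>y\<in>V. \<Sum>z\<in>V. \<Sum>x\<in>V. F x y z)"
    by (intro sum.cong refl sum.swap)
  finally show ?thesis .
qed

lemma T3_rot: "T3 V f g h = T3 V g h f"
  unfolding T3_def by (subst sum3_rot) (simp add: mult.commute mult.left_commute)

locale bounds =
  fixes V :: "'a set" and A p :: "'a \<Rightarrow> 'a \<Rightarrow> real" and M :: real
  assumes fin: "finite V"
    and nA: "\<And>a b. 0 \<le> A a b" and np: "\<And>a b. 0 \<le> p a b"
    and pM: "\<And>a b. a \<in> V \<Longrightarrow> p a b \<le> M"
    and p1: "\<And>a. a \<in> V \<Longrightarrow> (\<Sum>b\<in>V. p a b) \<le> 1"
    and A1: "\<And>a. a \<in> V \<Longrightarrow> (\<Sum>b\<in>V. A a b) \<le> 27"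
    and A2: "\<And>b. b \<in> V \<Longrightarrow> (\<Sum>a\<in>V. A a b) \<le> 27"
begin

lemma per_x_sum: "(\<And>x. x \<in> V \<Longrightarrow> (\<Sum>y\<in>V. \<Sum>z\<in>V. F x y z) \<le> K) \<Longrightarrow>
   (\<Sum>x\<in>V. \<Sum>y\<in>V. \<Sum>z\<in>V. F x y z) \<le> real (card V) * K"
  using sum_mono[of V "\<lambda>x. \<Sum>y\<in>V. \<Sum>z\<in>V. F x y z" "\<lambda>_. K"] by simp

lemma T_pAA: "T3 V p A A \<le> real (card V) * (729 * M)"
  unfolding T3_def
proof (rule per_x_sum)
  fix x assume x: "x \<in> V"
  have "(\<Sum>y\<in>V. \<Sum>z\<in>V. p x y * A y z * A z x) \<le> (\<Sum>y\<in>V. \<Sum>z\<in>V. M * (A y z * A z x))"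
    using x by (intro sum_mono) (simp add: mult.assoc mult_right_mono pM nA)
  also have "\<dots> = M * (\<Sum>y\<in>V. \<Sum>z\<in>V. A y z * A z x)" by (simp add: sum_distrib_left)
  also have "\<dots> = M * (\<Sum>z\<in>V. \<Sum>y\<in>V. A y z * A z x)" by (subst sum.swap) (rule refl)
  also have "\<dots> = M * (\<Sum>z\<in>V. (\<Sum>y\<in>V. A y z) * A z x)" by (simp add: sum_distrib_right)
  also have "\<dots> \<le> M * (\<Sum>z\<in>V. 27 * A z x)"
  proof -
    have M0: "0 \<le> M" using pM[OF x, of x] np[of x x] by linarith
    show ?thesis using M0 by (intro mult_left_mono sum_mono mult_right_mono A2 nA) auto
  qed
  also have "\<dots> \<le> M * (27 * 27)"
  proof -
    have M0: "0 \<le> M" using pM[OF x, of x] np[of x x] by linarith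
    show ?thesis using M0 A2[OF x] by (intro mult_left_mono) (auto simp: sum_distrib_left[symmetric])
  qed
  finally show "(\<Sum>y\<in>V. \<Sum>z\<in>V. p x y * A y z * A z x) \<le> 729 * M" by simp
qed

lemma T_ppA: "T3 V p p A \<le> real (card V) * (27 * M)"
  unfolding T3_def
proof (rule per_x_sum)
  fix x assume x: "x \<in> V"
  have M0: "0 \<le> M" using pM[OF x, of x] np[of x x] by linarith
  have "(\<Sum>y\<in>V. \<Sum>z\<in>V. p x y * p y z * A z x) \<le> (\<Sum>y\<in>V. p x y * (\<Sum>z\<in>V. M * A z x))"
    unfolding sum_distrib_left
    by (intro sum_mono) (auto simp: mult.assoc intro!: mult_left_mono mult_right_mono pM nA np)
  also have "\<dots> \<le> (\<Sum>y\<in>V. p x y * (27 * M))"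
  proof -
    have sA: "(\<Sum>z\<in>V. M * A z x) \<le> 27 * M"
      using mult_left_mono[OF A2[OF x] M0] by (simp add: sum_distrib_left mult.commute)
    show ?thesis using sA by (intro sum_mono mult_left_mono np)
  qed
  also have "\<dots> \<le> 27 * M"
  proof -
    have "0 \<le> 27 * M" using M0 by simp
    from mult_right_mono[OF p1[OF x] this] show ?thesis by (simp add: sum_distrib_right)
  qed
  finally show "(\<Sum>y\<in>V. \<Sum>z\<in>V. p x y * p y z * A z x) \<le> 27 * M" .
qed

lemma T_ppp: "T3 V p p p \<le> real (card V) * M"
  unfolding T3_def
proof (rule per_x_sum)
  fix x assume x: "x \<in> V"
  have M0: "0 \<le> M" using pM[OF x, of x] np[of x x] by linarith
  have "(\<Sum>y\<in>V. \<Sum>z\<in>V. p x y * p y z * p z x) \<le> (\<Sum>y\<in>V. p x y * (\<Sum>z\<in>V. p y z * M))"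
    unfolding sum_distrib_left
    by (intro sum_mono) (auto simp: mult.assoc intro!: mult_left_mono pM np)
  also have "\<dots> \<le> (\<Sum>y\<in>V. p x y * M)"
  proof (intro sum_mono mult_left_mono np)
    fix y assume y: "y \<in> V"
    show "(\<Sum>z\<in>V. p y z * M) \<le> M" using mult_right_mono[OF p1[OF y] M0]
      by (simp add: sum_distrib_right)
  qed
  also have "\<dots> \<le> M"
    using mult_right_mono[OF p1[OF x] M0] by (simp add: sum_distrib_right)
  finally show "(\<Sum>y\<in>V. \<Sum>z\<in>V. p x y * p y z * p z x) \<le> M" .
qed

lemma total:
  "T3 V p A A + T3 V A p A + T3 V A A p + T3 V p p A + T3 V p A p + T3 V A p p + T3 V p p p
    \<le> real (card V) * (2269 * M)"
proof -
  have "T3 V A p A = T3 V p A A" by (rule T3_rot)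
  moreover have "T3 V A A p = T3 V p A A" using T3_rot[of V A A p] T3_rot[of V A p A] by simp
  moreover have "T3 V A p p = T3 V p p A" by (rule T3_rot)
  moreover have "T3 V p A p = T3 V p p A" using T3_rot[of V p A p] T3_rot[of V A p p] by simp
  ultimately show ?thesis using T_pAA T_ppA T_ppp by (simp add: algebra_simps)
qed

end



lemma Gv_nonneg: "0 \<le> Gv n x y z"
proof -
  have a: "\<And>a b. 0 \<le> Aa n a b" by (simp add: Aa_def)
  have p: "\<And>a b. 0 \<le> pp n a b" by (simp add: pp_def)
  have "Aa n x y * Aa n y z * Aa n z x \<le> (Aa n x y + pp n x y) * (Aa n y z + pp n y z) * (Aa n z x + pp n z x)"
    using a p by (intro mult_mono add_nonneg_nonneg) auto
  thus ?thesis by (simp add: Gv_def)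
qed

lemma E_le_G:
  assumes pos: "\<And>u. u \<in> octV n \<Longrightarrow> 0 < Ssum n u"
  shows "measure_pmf.expectation (osw_pmf n) (\<lambda>c. real (num_C3w n c))
     \<le> (\<Sum>x\<in>octV n. \<Sum>y\<in>octV n. \<Sum>z\<in>octV n. Gv n x y z)"
proof -
  let ?V3 = "octV n \<times> octV n \<times> octV n"
  let ?g = "\<lambda>t c. case t of (x,y,z) \<Rightarrow> if x \<noteq> y \<and> y \<noteq> z \<and> x \<noteq> z then Hc n c x y z else 0"
  have gb: "\<And>t c. 0 \<le> ?g t c \<and> ?g t c \<le> 8"
    using Hc_nonneg Hc_le by (auto split: prod.splits)
  have intg: "\<And>t. integrable (measure_pmf (osw_pmf n)) (?g t)"
    by (rule measure_pmf.integrable_const_bound[where B=8]) (use gb in \<open>auto intro!: AE_pmfI\<close>)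
  have Dint: "integrable (measure_pmf (osw_pmf n)) (Dsum n)"
    unfolding Dsum_def using intg by (intro Bochner_Integration.integrable_sum) auto
  have numint: "integrable (measure_pmf (osw_pmf n)) (\<lambda>c. real (num_C3w n c))"
  proof (rule measure_pmf.integrable_const_bound[where B="real (card ?V3)"])
    show "AE c in measure_pmf (osw_pmf n). norm (real (num_C3w n c)) \<le> real (card ?V3)"
    proof (rule AE_pmfI)
      fix c
      have "num_C3w n c \<le> card (C3w_triples n c)"
        unfolding num_C3w_def by (rule card_image_le[OF finite_C3w])
      also have "\<dots> \<le> card ?V3"
        by (rule card_mono) (auto simp: finite_octV C3w_triples_def)
      finally show "norm (real (num_C3w n c)) \<le> real (card ?V3)" by simp
    qed
  qed simp
  have "measure_pmf.expectation (osw_pmf n) (\<lambda>c. real (num_C3w n c)) \<le> measure_pmf.expectation (osw_pmf n) (Dsum n)"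
    by (rule integral_mono[OF numint Dint num_le])
  also have "measure_pmf.expectation (osw_pmf n) (Dsum n) = (\<Sum>t\<in>?V3. measure_pmf.expectation (osw_pmf n) (?g t))"
    unfolding Dsum_def using intg by (intro Bochner_Integration.integral_sum) auto
  also have "\<dots> \<le> (\<Sum>t\<in>?V3. case t of (x,y,z) \<Rightarrow> Gv n x y z)"
  proof (rule sum_mono)
    fix t assume t: "t \<in> ?V3"
    obtain x y z where te: "t = (x,y,z)" by (cases t) auto
    show "measure_pmf.expectation (osw_pmf n) (?g t) \<le> (case t of (x,y,z) \<Rightarrow> Gv n x y z)"
    proof (cases "x \<noteq> y \<and> y \<noteq> z \<and> x \<noteq> z")
      case True
      hence "?g t = (\<lambda>c. Hc n c x y z)" by (auto simp: te)
      thus ?thesis using E_H[OF pos] True t te by auto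
    next
      case False
      hence "?g t = (\<lambda>c. 0)" by (auto simp: te)
      thus ?thesis using Gv_nonneg te by simp
    qed
  qed
  also have "\<dots> = (\<Sum>x\<in>octV n. \<Sum>y\<in>octV n. \<Sum>z\<in>octV n. Gv n x y z)"
    by (simp add: sum.cartesian_product)
  finally show ?thesis .
qed

lemma G_expand:
  "(\<Sum>x\<in>V. \<Sum>y\<in>V. \<Sum>z\<in>V. Gv n x y z) =
   T3 V (pp n) (Aa n) (Aa n) + T3 V (Aa n) (pp n) (Aa n) + T3 V (Aa n) (Aa n) (pp n) +
   T3 V (pp n) (pp n) (Aa n) + T3 V (pp n) (Aa n) (pp n) + T3 V (Aa n) (pp n) (pp n) + T3 V (pp n) (pp n) (pp n)"
proof -
  have e: "\<And>x y z. Gv n x y z = pp n x y * Aa n y z * Aa n z x + Aa n x y * pp n y z * Aa n z x + Aa n x y * Aa n y z * pp n z x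
     + pp n x y * pp n y z * Aa n z x + pp n x y * Aa n y z * pp n z x + Aa n x y * pp n y z * pp n z x + pp n x y * pp n y z * pp n z x"
    by (simp add: Gv_def algebra_simps)
  show ?thesis unfolding T3_def e by (simp only: sum.distrib)
qed

lemma box_card: "card {b. near a b} \<le> 27"
proof -
  obtain x y z where a: "a = (x,y,z)" by (cases a) auto
  have "{b. near a b} \<subseteq> {x-1..x+1} \<times> {y-1..y+1} \<times> {z-1..z+1}"
    by (auto simp: a near_def c1_def c2_def c3_def abs_le_iff)
  hence "card {b. near a b} \<le> card ({x-1..x+1} \<times> {y-1..y+1} \<times> {z-1..z+1})"
    by (rule card_mono[rotated]) auto
  also have "\<dots> = 27" by (simp add: card_cartesian_product)
  finally show ?thesis .
qed

lemma sumA: "(\<Sum>b\<in>octV n. Aa n a b) \<le> 27"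
proof -
  have "(\<Sum>b\<in>octV n. Aa n a b) = real (card (octV n \<inter> {b. octAdj n a b}))"
    by (simp add: Aa_def finite_octV)
  also have "card (octV n \<inter> {b. octAdj n a b}) \<le> card {b. near a b}"
  proof (rule card_mono)
    show "finite {b. near a b}"
    proof -
      obtain x y z where a: "a = (x,y,z)" by (cases a) auto
      have "{b. near a b} \<subseteq> {x-1..x+1} \<times> {y-1..y+1} \<times> {z-1..z+1}"
        by (auto simp: a near_def c1_def c2_def c3_def abs_le_iff)
      thus ?thesis by (rule finite_subset) auto
    qed
  qed (auto simp: octAdj_near)
  hence "real (card (octV n \<inter> {b. octAdj n a b})) \<le> 27" using box_card[of a] by linarith
  finally show ?thesis .
qed

lemma octAdj_sym: "octAdj n a b = octAdj n b a"
  unfolding octAdj_def by (auto simp: abs_minus_commute)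

lemma main_bound:
  assumes L: "0 < L" and S: "\<And>u. u \<in> octV n \<Longrightarrow> L \<le> Ssum n u"
  shows "measure_pmf.expectation (osw_pmf n) (\<lambda>c. real (num_C3w n c))
     \<le> real (card (octV n)) * (2269 * (1 / L))"
proof -
  have pos: "\<And>u. u \<in> octV n \<Longrightarrow> 0 < Ssum n u" using L S by (meson less_le_trans)
  interpret bounds "octV n" "Aa n" "pp n" "1 / L"
  proof
    show "finite (octV n)" by (rule finite_octV)
  next
    fix a b show "0 \<le> Aa n a b" by (simp add: Aa_def)
  next
    fix a b show "0 \<le> pp n a b" by (simp add: pp_def)
  next
    fix a b assume a: "a \<in> octV n"
    have "pp n a b \<le> inverse (Ssum n a)" unfolding pp_def by (rule pmf_choice_le[OF pos[OF a]])
    also have "\<dots> \<le> 1 / L" using S[OF a] L by (simp add: inverse_eq_divide frac_le)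
    finally show "pp n a b \<le> 1 / L" .
  next
    fix a
    show "(\<Sum>b\<in>octV n. pp n a b) \<le> 1"
      unfolding pp_def by (subst measure_measure_pmf_finite[symmetric]) (auto simp: finite_octV)
  next
    fix a show "(\<Sum>b\<in>octV n. Aa n a b) \<le> 27" by (rule sumA)
  next
    fix b show "(\<Sum>a\<in>octV n. Aa n a b) \<le> 27"
      using sumA[of n b] by (simp add: Aa_def octAdj_sym[of n _ b])
  qed
  show ?thesis using E_le_G[OF pos] G_expand[where V="octV n" and n=n] total by linarith
qed



theorem theorem4:
  shows "(\<lambda>n. measure_pmf.expectation (osw_pmf n) (\<lambda>c. real (num_C3w n c)))
           \<in> O(\<lambda>n. real n ^ 2 / ln (real n))"
proof (rule bigoI[where c = "18 * 2269 * 8"])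
  show "\<forall>\<^sub>F n in at_top. norm (measure_pmf.expectation (osw_pmf n) (\<lambda>c. real (num_C3w n c)))
          \<le> (18 * 2269 * 8) * norm (real n ^ 2 / ln (real n))"
  proof (rule eventually_mono[OF eventually_ge_at_top[of "36::nat"]])
    fix n :: nat assume n36: "36 \<le> n"
    define m where "m = n div 6"
    define E where "E = measure_pmf.expectation (osw_pmf n) (\<lambda>c. real (num_C3w n c))"
    have m6: "6 * m \<le> n" by (simp add: m_def)
    have mn: "real n / 6 \<le> real m + 1"
    proof -
      have "n < 6 * (m + 1)" by (simp add: m_def)
      hence "real n < real (6 * (m + 1))" by (simp only: of_nat_less_iff)
      thus ?thesis by simp
    qed
    have n0: "0 < real n" using n36 by simp
    have sq6: "6 \<le> sqrt (real n)"
      using real_sqrt_le_mono[of 36 "real n"] n36 by simp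
    have sqn: "sqrt (real n) \<le> real n / 6"
    proof -
      have "sqrt (real n) * sqrt (real n) = real n" using n0 by simp
      hence "6 * sqrt (real n) \<le> real n" using sq6 mult_right_mono[OF sq6, of "sqrt (real n)"] by simp
      thus ?thesis by simp
    qed
    have lnn: "0 < ln (real n)" using n36 by simp
    have lnm: "ln (real n) / 2 \<le> ln (real m + 1)"
    proof -
      have "ln (sqrt (real n)) \<le> ln (real m + 1)"
        using sqn mn sq6 by (subst ln_le_cancel_iff) auto
      thus ?thesis using n0 by (simp add: ln_sqrt)
    qed
    define L where "L = ln (real m + 1) / 4"
    have "0 < ln (real m + 1)" using lnm lnn by linarith
    hence L0: "0 < L" by (simp add: L_def)
    have S: "\<And>u. u \<in> octV n \<Longrightarrow> L \<le> Ssum n u"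
      unfolding L_def Ssum_def by (rule sum_lower_V[OF _ m6])
    have Eb: "E \<le> real (card (octV n)) * (2269 * (1 / L))"
      unfolding E_def by (rule main_bound[OF L0 S])
    have E0: "0 \<le> E" unfolding E_def by (rule Bochner_Integration.integral_nonneg) simp
    have cV: "real (card (octV n)) \<le> 18 * real n ^ 2"
    proof -
      have r: "36 \<le> real n" using n36 by simp
      have "2 + real n * 8 \<le> real n * (real n * 10)"
      proof -
        have "real n * 36 \<le> real n * (real n * 10)" using r by (intro mult_left_mono) auto
        thus ?thesis using r by linarith
      qed
      hence "2 * (2 * real n + 1)^2 \<le> 18 * real n ^ 2" by (simp add: power2_eq_square algebra_simps)
      thus ?thesis using card_octV[of n] by linarith
    qed
    have iL: "1 / L \<le> 8 / ln (real n)"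
      using lnm lnn L0 by (simp add: L_def field_simps)
    have "E \<le> (18 * real n ^ 2) * (2269 * (8 / ln (real n)))"
      using Eb cV iL L0 by (smt (verit) mult_mono mult_left_mono of_nat_0_le_iff zero_le_power2 divide_nonneg_nonneg)
    also have "\<dots> = (18 * 2269 * 8) * (real n ^ 2 / ln (real n))" by simp
    finally have "E \<le> (18 * 2269 * 8) * (real n ^ 2 / ln (real n))" .
    thus "norm E \<le> (18 * 2269 * 8) * norm (real n ^ 2 / ln (real n))"
      using E0 lnn by simp
  qed
qed


end
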